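(* Let $p$ be a prime and $G$ a finite $p$-group of maximal class which has an abelian maximal subgroup. Then every non-abelian subgroup $H$ of $G$ satisfies $C_G(H)\le H$.
   Context: A group of order $p^n$ ($n\ge 2$) has maximal class if its nilpotency class is $n-1$. $C_G(H)$ denotes the centralizer of $H$ in $G$. *)

theory Defs
  imports "HOL-Algebra.Algebra"
begin

definition commutator :: "('a, 'b) monoid_scheme \<Rightarrow> 'a \<Rightarrow> 'a \<Rightarrow> 'a" where
  "commutator G x y = inv\<^bsub>G\<^esub> x \<otimes>\<^bsub>G\<^esub> inv\<^bsub>G\<^esub> y \<otimes>\<^bsub>G\<^esub> x \<otimes>\<^bsub>G\<^esub> y"

definition commutator_subgroup :: "('a, 'b) monoid_scheme \<Rightarrow> 'a set \<Rightarrow> 'a set \<Rightarrow> 'a set" where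
  "commutator_subgroup G A B = generate G {commutator G a b | a b. a \<in> A \<and> b \<in> B}"

text \<open>Lower central series, shifted: lower_central G i = gamma_(i+1)(G).\<close>
primrec lower_central :: "('a, 'b) monoid_scheme \<Rightarrow> nat \<Rightarrow> 'a set" where
  "lower_central G 0 = carrier G"
| "lower_central G (Suc i) = commutator_subgroup G (lower_central G i) (carrier G)"

definition nilpotency_class :: "('a, 'b) monoid_scheme \<Rightarrow> nat" where
  "nilpotency_class G = (LEAST c. lower_central G c = {\<one>\<^bsub>G\<^esub>})"

definition nilpotent_group :: "('a, 'b) monoid_scheme \<Rightarrow> bool" where
  "nilpotent_group G = (\<exists>c. lower_central G c = {\<one>\<^bsub>G\<^esub>})"

definition maximal_class :: "('a, 'b) monoid_scheme \<Rightarrow> nat \<Rightarrow> bool" where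
  "maximal_class G p = (\<exists>n. n \<ge> 2 \<and> order G = p ^ n \<and> nilpotent_group G
      \<and> nilpotency_class G = n - 1)"

definition centralizer :: "('a, 'b) monoid_scheme \<Rightarrow> 'a set \<Rightarrow> 'a set" where
  "centralizer G H = {g \<in> carrier G. \<forall>h \<in> H. g \<otimes>\<^bsub>G\<^esub> h = h \<otimes>\<^bsub>G\<^esub> g}"

definition abelian_set :: "('a, 'b) monoid_scheme \<Rightarrow> 'a set \<Rightarrow> bool" where
  "abelian_set G H = (\<forall>x \<in> H. \<forall>y \<in> H. x \<otimes>\<^bsub>G\<^esub> y = y \<otimes>\<^bsub>G\<^esub> x)"

definition maximal_subgroup :: "('a, 'b) monoid_scheme \<Rightarrow> 'a set \<Rightarrow> bool" where
  "maximal_subgroup G M = (subgroup M G \<and> M \<noteq> carrier G \<and>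
      (\<forall>K. subgroup K G \<and> M \<subseteq> K \<longrightarrow> K = M \<or> K = carrier G))"

end

theory Submission
  imports Defs
begin


context group begin

lemma mult_inv_cancel1: "x \<in> carrier G \<Longrightarrow> y \<in> carrier G \<Longrightarrow> x \<otimes> (inv x \<otimes> y) = y"
  by (simp add: m_assoc[symmetric])
lemma mult_inv_cancel2: "x \<in> carrier G \<Longrightarrow> y \<in> carrier G \<Longrightarrow> inv x \<otimes> (x \<otimes> y) = y"
  by (simp add: m_assoc[symmetric])

lemmas gsimps = m_assoc mult_inv_cancel1 mult_inv_cancel2 inv_mult_group

lemma comm_closed[simp]: "x \<in> carrier G \<Longrightarrow> y \<in> carrier G \<Longrightarrow> commutator G x y \<in> carrier G"
  by (simp add: commutator_def)

lemma comm_inv: "x \<in> carrier G \<Longrightarrow> y \<in> carrier G \<Longrightarrow> commutator G x y = inv (commutator G y x)"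
  by (simp add: commutator_def gsimps)

lemma comm_mult_right: "x \<in> carrier G \<Longrightarrow> y \<in> carrier G \<Longrightarrow> z \<in> carrier G \<Longrightarrow>
  commutator G x (y \<otimes> z) = commutator G x z \<otimes> (inv z \<otimes> commutator G x y \<otimes> z)"
  by (simp add: commutator_def gsimps)

lemma comm_mult_left: "x \<in> carrier G \<Longrightarrow> y \<in> carrier G \<Longrightarrow> z \<in> carrier G \<Longrightarrow>
  commutator G (x \<otimes> y) z = (inv y \<otimes> commutator G x z \<otimes> y) \<otimes> commutator G y z"
  by (simp add: commutator_def gsimps)

lemma conj_comm: "x \<in> carrier G \<Longrightarrow> y \<in> carrier G \<Longrightarrow> g \<in> carrier G \<Longrightarrow>
  inv g \<otimes> commutator G x y \<otimes> g = commutator G (inv g \<otimes> x \<otimes> g) (inv g \<otimes> y \<otimes> g)"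
  by (simp add: commutator_def gsimps)

lemma comm_one_iff: "x \<in> carrier G \<Longrightarrow> y \<in> carrier G \<Longrightarrow> commutator G x y = \<one> \<longleftrightarrow> x \<otimes> y = y \<otimes> x"
proof -
  assume x: "x \<in> carrier G" and y: "y \<in> carrier G"
  have "commutator G x y = inv (y \<otimes> x) \<otimes> (x \<otimes> y)" using x y by (simp add: commutator_def gsimps)
  also have "... = \<one> \<longleftrightarrow> x \<otimes> y = y \<otimes> x"
    using x y by (metis inv_closed m_closed inv_equality inv_inv r_inv)
  finally show ?thesis .
qed

lemma conj_A: "x \<in> carrier G \<Longrightarrow> y \<in> carrier G \<Longrightarrow> x \<otimes> y = y \<otimes> x \<Longrightarrow> inv y \<otimes> x \<otimes> y = x"
  by (metis inv_closed m_assoc mult_inv_cancel2)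

lemma comm_conj_eq: "x \<in> carrier G \<Longrightarrow> u \<in> carrier G \<Longrightarrow> inv u \<otimes> x \<otimes> u = x \<otimes> commutator G x u"
  by (simp add: commutator_def gsimps)

end


context group begin

lemma lc_sub: "lower_central G i \<subseteq> carrier G"
proof (induction i)
  case 0 then show ?case by simp
next
  case (Suc i)
  have "{commutator G a b | a b. a \<in> lower_central G i \<and> b \<in> carrier G} \<subseteq> carrier G"
    using Suc by auto
  then show ?case by (simp add: commutator_subgroup_def generate_incl)
qed

lemma lc_subgroup: "subgroup (lower_central G i) G"
proof (cases i)
  case 0 then show ?thesis by (simp add: subgroup_self)
next
  case (Suc j)
  have "{commutator G a b | a b. a \<in> lower_central G j \<and> b \<in> carrier G} \<subseteq> carrier G"
    using lc_sub[of j] by (auto intro!: comm_closed)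
  then show ?thesis using Suc by (simp add: commutator_subgroup_def generate_is_subgroup)
qed

lemma lc_comm_in: "u \<in> lower_central G i \<Longrightarrow> g \<in> carrier G \<Longrightarrow> commutator G u g \<in> lower_central G (Suc i)"
  by (auto simp add: commutator_subgroup_def intro: generate.incl)

lemma lc_Suc_le: "subgroup M G \<Longrightarrow> (\<And>u g. u \<in> lower_central G i \<Longrightarrow> g \<in> carrier G \<Longrightarrow> commutator G u g \<in> M)
   \<Longrightarrow> lower_central G (Suc i) \<subseteq> M"
  unfolding lower_central.simps commutator_subgroup_def by (rule generate_subgroup_incl) auto

lemma finite_sub_subgroup:
  assumes fin: "finite (carrier G)" and S: "S \<subseteq> carrier G" "\<one> \<in> S"
    and mult: "\<And>x y. x \<in> S \<Longrightarrow> y \<in> S \<Longrightarrow> x \<otimes> y \<in> S"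
  shows "subgroup S G"
proof (rule subgroupI)
  show "S \<subseteq> carrier G" "S \<noteq> {}" using S by auto
  show "x \<otimes> y \<in> S" if "x \<in> S" "y \<in> S" for x y using mult that .
  fix x assume x: "x \<in> S"
  have pw: "x [^] (k::nat) \<in> S" for k
    by (induction k) (use S x mult in \<open>auto simp: nat_pow_Suc\<close>)
  have xc: "x \<in> carrier G" using x S by auto
  have o: "order G \<ge> 1" using order_gt_0_iff_finite fin by (simp add: Suc_le_eq)
  have "x [^] (order G - 1) \<otimes> x = \<one>"
    using pow_order_eq_1[OF xc] o xc by (metis le_add_diff_inverse2 nat_pow_Suc2 add.commute plus_1_eq_Suc nat_pow_Suc)
  then have "inv x = x [^] (order G - 1)" using xc by (simp add: inv_equality)
  then show "inv x \<in> S" using pw by simp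
qed

lemma maximal_normal:
  assumes fin: "finite (carrier G)" and nil: "lower_central G m = {\<one>}"
    and max: "maximal_subgroup G A"
  shows "A \<lhd> G"
proof -
  have sA: "subgroup A G" and ne: "A \<noteq> carrier G" and mx: "\<And>K. subgroup K G \<Longrightarrow> A \<subseteq> K \<Longrightarrow> K = A \<or> K = carrier G"
    using max unfolding maximal_subgroup_def by auto
  have Ac: "A \<subseteq> carrier G" using sA subgroup.subset by auto
  have ex: "\<exists>k. lower_central G k \<subseteq> A" using nil subgroup.one_closed[OF sA] by (intro exI[of _ m]) auto
  define k where "k = (LEAST k. lower_central G k \<subseteq> A)"
  have k1: "lower_central G k \<subseteq> A" unfolding k_def using LeastI_ex[OF ex] .
  have k0: "k \<noteq> 0" using k1 ne Ac by auto
  then obtain j where kj: "k = Suc j" using not0_implies_Suc by blast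
  have "\<not> lower_central G j \<subseteq> A" using not_less_Least[of j "\<lambda>k. lower_central G k \<subseteq> A"] kj k_def by auto
  then obtain u where u: "u \<in> lower_central G j" "u \<notin> A" by auto
  have uc: "u \<in> carrier G" using u lc_sub by auto
  define S where "S = {g \<in> carrier G. \<forall>a\<in>A. inv g \<otimes> a \<otimes> g \<in> A}"
  have sS: "subgroup S G"
  proof (rule finite_sub_subgroup[OF fin])
    show "S \<subseteq> carrier G" "\<one> \<in> S" using Ac by (auto simp: S_def)
    fix x y assume x: "x \<in> S" and y: "y \<in> S"
    show "x \<otimes> y \<in> S" unfolding S_def
    proof (intro CollectI conjI ballI)
      show "x \<otimes> y \<in> carrier G" using x y by (auto simp: S_def)
      fix a assume a: "a \<in> A"
      have xc: "x \<in> carrier G" and yc: "y \<in> carrier G" using x y by (auto simp: S_def)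
      have "inv x \<otimes> a \<otimes> x \<in> A" using x a by (auto simp: S_def)
      then have "inv y \<otimes> (inv x \<otimes> a \<otimes> x) \<otimes> y \<in> A" using y by (auto simp: S_def)
      moreover have "inv y \<otimes> (inv x \<otimes> a \<otimes> x) \<otimes> y = inv (x \<otimes> y) \<otimes> a \<otimes> (x \<otimes> y)"
        using xc yc a Ac by (auto simp: gsimps)
      ultimately show "inv (x \<otimes> y) \<otimes> a \<otimes> (x \<otimes> y) \<in> A" by simp
    qed
  qed
  have "u \<in> S" unfolding S_def
  proof (intro CollectI conjI ballI uc)
    fix a assume a: "a \<in> A"
    have ac: "a \<in> carrier G" using a Ac by auto
    have "commutator G u a \<in> A" using lc_comm_in[OF u(1) ac] k1 kj by auto
    then have "commutator G a u \<in> A" using comm_inv[OF ac uc] subgroup.m_inv_closed[OF sA] by simp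
    then show "inv u \<otimes> a \<otimes> u \<in> A" using comm_conj_eq[OF ac uc] a subgroup.m_closed[OF sA] by simp
  qed
  moreover have "A \<subseteq> S" unfolding S_def using Ac sA by (auto intro: subgroup.m_closed subgroup.m_inv_closed)
  ultimately have SG: "S = carrier G" using mx[OF sS] u(2) by auto
  show ?thesis
  proof (subst normal_inv_iff, intro conjI sA ballI)
    fix x h assume x: "x \<in> carrier G" and h: "h \<in> A"
    have "inv x \<in> S" using SG x by auto
    then show "x \<otimes> h \<otimes> inv x \<in> A" using h x by (auto simp: S_def)
  qed
qed

end


context group begin

lemma struct_decomp:
  assumes fin: "finite (carrier G)" and nA: "A \<lhd> G" and mA: "maximal_subgroup G A"
    and t: "t \<in> carrier G" "t \<notin> A" and g: "g \<in> carrier G"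
  shows "\<exists>a\<in>A. \<exists>i::nat. g = a \<otimes> t [^] i"
proof -
  have sA: "subgroup A G" and mx: "\<And>K. subgroup K G \<Longrightarrow> A \<subseteq> K \<Longrightarrow> K = A \<or> K = carrier G"
    using mA unfolding maximal_subgroup_def by auto
  have Ac: "A \<subseteq> carrier G" using sA subgroup.subset by auto
  define S where "S = {a \<otimes> t [^] i | a i. a \<in> A \<and> (i::nat) \<ge> 0}"
  have sS: "subgroup S G"
  proof (rule finite_sub_subgroup[OF fin])
    show "S \<subseteq> carrier G" using Ac t by (auto simp: S_def)
    show "\<one> \<in> S" unfolding S_def using subgroup.one_closed[OF sA] by (intro CollectI exI[of _ \<one>] exI[of _ "0::nat"]) auto
    fix x y assume "x \<in> S" "y \<in> S"
    then obtain a i b j where x: "x = a \<otimes> t [^] (i::nat)" "a \<in> A" and y: "y = b \<otimes> t [^] (j::nat)" "b \<in> A"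
      unfolding S_def by auto
    have ac: "a \<in> carrier G" and bc: "b \<in> carrier G" using x y Ac by auto
    have c: "t [^] i \<otimes> b \<otimes> inv (t [^] i) \<in> A" using normal.inv_op_closed2[OF nA _ y(2)] t by auto
    have "x \<otimes> y = (a \<otimes> (t [^] i \<otimes> b \<otimes> inv (t [^] i))) \<otimes> t [^] (i + j)"
      using ac bc t x y by (simp add: nat_pow_mult[symmetric] gsimps)
    moreover have "a \<otimes> (t [^] i \<otimes> b \<otimes> inv (t [^] i)) \<in> A" using c x(2) subgroup.m_closed[OF sA] by auto
    ultimately show "x \<otimes> y \<in> S" unfolding S_def by blast
  qed
  have "A \<subseteq> S"
  proof
    fix x assume "x \<in> A"
    then have "x = x \<otimes> t [^] (0::nat) \<and> x \<in> A \<and> (0::nat) \<ge> 0" using Ac by auto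
    then show "x \<in> S" unfolding S_def by blast
  qed
  moreover have "t \<in> S" unfolding S_def using subgroup.one_closed[OF sA] t
    by (intro CollectI exI[of _ \<one>] exI[of _ "1::nat"]) auto
  ultimately have "S = carrier G" using mx[OF sS] t by auto
  then show ?thesis using g unfolding S_def by auto
qed

lemma struct_central:
  assumes fin: "finite (carrier G)" and nA: "A \<lhd> G" and mA: "maximal_subgroup G A"
    and abA: "abelian_set G A"
    and t: "t \<in> carrier G" "t \<notin> A" and x: "x \<in> A" "x \<otimes> t = t \<otimes> x" and g: "g \<in> carrier G"
  shows "x \<otimes> g = g \<otimes> x"
proof -
  have sA: "subgroup A G" using mA unfolding maximal_subgroup_def by auto
  have Ac: "A \<subseteq> carrier G" using sA subgroup.subset by auto
  obtain a i where a: "a \<in> A" and gi: "g = a \<otimes> t [^] (i::nat)" using struct_decomp[OF fin nA mA t g] by auto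
  have xc: "x \<in> carrier G" and ac: "a \<in> carrier G" using x a Ac by auto
  have xa: "x \<otimes> a = a \<otimes> x" using abA x a unfolding abelian_set_def by auto
  have xt: "x \<otimes> t [^] i = t [^] i \<otimes> x" using group_commutes_pow[of t x i] x t xc by simp
  show ?thesis using xa xt xc ac t unfolding gi
    by (metis m_assoc nat_pow_closed)
qed

end

locale mcs = group G for G (structure) +
  fixes A and h
  assumes fin: "finite (carrier G)" and nA: "A \<lhd> G" and mA: "maximal_subgroup G A"
    and abA: "abelian_set G A" and hc: "h \<in> carrier G" and hA: "h \<notin> A"
begin

definition phi where "phi x = commutator G x h"
definition B where "B k = (phi ^^ k) ` A"
definition ZA where "ZA = {x \<in> A. \<forall>g\<in>carrier G. x \<otimes> g = g \<otimes> x}"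

lemma sA: "subgroup A G" using mA unfolding maximal_subgroup_def by auto
lemma Ac: "A \<subseteq> carrier G" using sA subgroup.subset by auto
lemma Ac': "x \<in> A \<Longrightarrow> x \<in> carrier G" using Ac by auto
lemma comA: "x \<in> A \<Longrightarrow> y \<in> A \<Longrightarrow> x \<otimes> y = y \<otimes> x" using abA unfolding abelian_set_def by auto

lemma conjh_A: "x \<in> A \<Longrightarrow> inv h \<otimes> x \<otimes> h \<in> A"
  using normal.inv_op_closed1[OF nA hc] by auto

lemma phi_eq: "x \<in> carrier G \<Longrightarrow> phi x = inv x \<otimes> (inv h \<otimes> x \<otimes> h)"
  by (simp add: phi_def commutator_def gsimps hc)

lemma phi_A: "x \<in> A \<Longrightarrow> phi x \<in> A"
  using phi_eq[OF Ac'] conjh_A subgroup.m_closed[OF sA] subgroup.m_inv_closed[OF sA] by simp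

lemma phi_c: "x \<in> carrier G \<Longrightarrow> phi x \<in> carrier G"
  by (simp add: phi_def hc)

lemma phi_mult: assumes x: "x \<in> A" and y: "y \<in> A" shows "phi (x \<otimes> y) = phi x \<otimes> phi y"
proof -
  let ?cx = "inv h \<otimes> x \<otimes> h" and ?cy = "inv h \<otimes> y \<otimes> h"
  have cx: "?cx \<in> A" and cy: "?cy \<in> A" using conjh_A x y by auto
  have ix: "inv x \<in> A" and iy: "inv y \<in> A" using x y subgroup.m_inv_closed[OF sA] by auto
  have xc: "x \<in> carrier G" and yc: "y \<in> carrier G" using x y Ac by auto
  have "phi (x \<otimes> y) = inv y \<otimes> inv x \<otimes> ?cx \<otimes> ?cy"
    using xc yc hc by (simp add: phi_eq gsimps)
  also have "... = inv x \<otimes> inv y \<otimes> ?cx \<otimes> ?cy"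
    using comA[OF iy ix] by simp
  also have "... = inv x \<otimes> (inv y \<otimes> ?cx) \<otimes> ?cy"
    using xc yc hc by (simp add: m_assoc)
  also have "... = inv x \<otimes> (?cx \<otimes> inv y) \<otimes> ?cy"
    using comA[OF iy cx] by simp
  also have "... = phi x \<otimes> phi y"
    using xc yc hc by (simp add: phi_eq gsimps)
  finally show ?thesis .
qed

lemma phi_conj: "x \<in> carrier G \<Longrightarrow> inv h \<otimes> phi x \<otimes> h = phi (inv h \<otimes> x \<otimes> h)"
  unfolding phi_def using conj_comm[of x h h] hc by (simp add: gsimps)

lemma phi_one_iff: assumes x: "x \<in> A" shows "phi x = \<one> \<longleftrightarrow> x \<in> ZA"
proof
  assume "phi x = \<one>"
  then have "x \<otimes> h = h \<otimes> x" using comm_one_iff[OF Ac'[OF x] hc] by (simp add: phi_def)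
  then show "x \<in> ZA" unfolding ZA_def using struct_central[OF fin nA mA abA hc hA x] x by auto
next
  assume "x \<in> ZA"
  then have "x \<otimes> h = h \<otimes> x" unfolding ZA_def using hc by auto
  then show "phi x = \<one>" using comm_one_iff[OF Ac'[OF x] hc] by (simp add: phi_def)
qed

end


context mcs begin

lemma B0: "B 0 = A" by (simp add: B_def)
lemma BSuc: "B (Suc k) = phi ` B k" by (simp add: B_def image_comp)

lemma B_A: "B k \<subseteq> A"
  by (induction k) (auto simp: B0 BSuc phi_A)

lemma phi_one: "phi \<one> = \<one>" by (simp add: phi_def commutator_def hc)

lemma phi_inv: assumes x: "x \<in> A" shows "phi (inv x) = inv (phi x)"
proof -
  have ix: "inv x \<in> A" using x subgroup.m_inv_closed[OF sA] by auto
  have "phi x \<otimes> phi (inv x) = \<one>" using phi_mult[OF x ix] Ac' x by (simp add: phi_one)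
  then show ?thesis using phi_c Ac' x ix by (metis inv_equality inv_closed l_inv m_assoc r_one group.inv_comm[OF is_group])
qed

lemma B_sub: "subgroup (B k) G"
proof (induction k)
  case 0 then show ?case using sA by (simp add: B0)
next
  case (Suc k)
  have BA: "B k \<subseteq> A" by (rule B_A)
  show ?case unfolding BSuc
  proof (rule subgroupI)
    show "phi ` B k \<subseteq> carrier G" using BA phi_A Ac by auto
    show "phi ` B k \<noteq> {}" using subgroup.one_closed[OF Suc] by auto
    fix a assume "a \<in> phi ` B k"
    then obtain x where x: "x \<in> B k" "a = phi x" by auto
    then show "inv a \<in> phi ` B k" using phi_inv[of x] BA subgroup.m_inv_closed[OF Suc] by (metis image_eqI subsetD)
  next
    fix a b assume "a \<in> phi ` B k" "b \<in> phi ` B k"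
    then obtain x y where x: "x \<in> B k" "a = phi x" and y: "y \<in> B k" "b = phi y" by auto
    then show "a \<otimes> b \<in> phi ` B k" using phi_mult[of x y] BA subgroup.m_closed[OF Suc] by (metis image_eqI subsetD)
  qed
qed

lemma B_mono: "B (Suc k) \<subseteq> B k"
proof (induction k)
  case 0 then show ?case using phi_A by (auto simp: B0 BSuc)
next
  case (Suc k) then show ?case by (simp add: BSuc image_mono)
qed

lemma B_mono': "j \<le> k \<Longrightarrow> B k \<subseteq> B j"
  by (induction k rule: dec_induct) (use B_mono in auto)

lemma B_conj: "m \<in> B k \<Longrightarrow> inv h \<otimes> m \<otimes> h \<in> B k"
proof (induction k arbitrary: m)
  case 0 then show ?case using conjh_A by (simp add: B0)
next
  case (Suc k)
  then obtain x where x: "x \<in> B k" "m = phi x" by (auto simp: BSuc)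
  have "inv h \<otimes> m \<otimes> h = phi (inv h \<otimes> x \<otimes> h)" using phi_conj x B_A Ac by auto
  then show ?case using Suc.IH[OF x(1)] by (simp add: BSuc)
qed

lemma conj_pow:
  assumes M: "M \<subseteq> carrier G" and cM: "\<And>m. m \<in> M \<Longrightarrow> inv h \<otimes> m \<otimes> h \<in> M" and m: "m \<in> M"
  shows "inv (h [^] (i::nat)) \<otimes> m \<otimes> h [^] i \<in> M"
proof (induction i)
  case 0 then show ?case using m M by auto
next
  case (Suc i)
  have "inv (h [^] Suc i) \<otimes> m \<otimes> h [^] Suc i = inv h \<otimes> (inv (h [^] i) \<otimes> m \<otimes> h [^] i) \<otimes> h"
    using m M hc by (simp add: nat_pow_Suc gsimps subsetD)
  then show ?case using cM[OF Suc] by simp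
qed

lemma normal_by_h:
  assumes sM: "subgroup M G" and MA: "M \<subseteq> A" and cM: "\<And>m. m \<in> M \<Longrightarrow> inv h \<otimes> m \<otimes> h \<in> M"
  shows "M \<lhd> G"
proof -
  have Mc: "M \<subseteq> carrier G" using MA Ac by auto
  have key: "inv g \<otimes> m \<otimes> g \<in> M" if g: "g \<in> carrier G" and m: "m \<in> M" for g m
  proof -
    obtain a i where a: "a \<in> A" and gi: "g = a \<otimes> h [^] (i::nat)" using struct_decomp[OF fin nA mA hc hA g] by auto
    have mA': "m \<in> A" using m MA by auto
    have am: "inv a \<otimes> m \<otimes> a = m" using conj_A[of m a] comA[OF mA' a] Ac' a mA' by simp
    have "inv g \<otimes> m \<otimes> g = inv (h [^] i) \<otimes> (inv a \<otimes> m \<otimes> a) \<otimes> h [^] i"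
      unfolding gi using Ac' a mA' hc by (simp add: gsimps)
    then show ?thesis using am conj_pow[OF Mc cM m] by simp
  qed
  show ?thesis
  proof (subst normal_inv_iff, intro conjI sM ballI)
    fix x m assume x: "x \<in> carrier G" and m: "m \<in> M"
    show "x \<otimes> m \<otimes> inv x \<in> M" using key[of "inv x" m] x m by simp
  qed
qed

lemma B_normal: "B k \<lhd> G"
  using normal_by_h[OF B_sub B_A B_conj] .

lemma K_lemma:
  assumes BB: "Bs \<subseteq> A" and nM: "M \<lhd> G" and ph: "\<And>b. b \<in> Bs \<Longrightarrow> phi b \<in> M"
    and b: "b \<in> Bs" and g: "g \<in> carrier G"
  shows "commutator G b g \<in> M"
proof -
  have sM: "subgroup M G" using nM normal_imp_subgroup by auto
  have bA: "b \<in> A" using b BB by auto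
  have bc: "b \<in> carrier G" using bA Ac by auto
  obtain a i where a: "a \<in> A" and gi: "g = a \<otimes> h [^] (i::nat)" using struct_decomp[OF fin nA mA hc hA g] by auto
  have pw: "commutator G b (h [^] (j::nat)) \<in> M" for j
  proof (induction j)
    case 0 then show ?case using bc sM subgroup.one_closed by (simp add: commutator_def)
  next
    case (Suc j)
    have "commutator G b (h [^] Suc j) = commutator G b h \<otimes> (inv h \<otimes> commutator G b (h [^] j) \<otimes> h)"
      using comm_mult_right[of b "h [^] j" h] bc hc by (simp add: nat_pow_Suc)
    moreover have "commutator G b h \<in> M" using ph[OF b] by (simp add: phi_def)
    moreover have "inv h \<otimes> commutator G b (h [^] j) \<otimes> h \<in> M" using normal.inv_op_closed1[OF nM hc Suc] .
    ultimately show ?case using subgroup.m_closed[OF sM] by simp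
  qed
  have ba: "commutator G b a = \<one>" using comm_one_iff[of b a] comA[OF bA a] bc Ac' a by simp
  have "commutator G b g = commutator G b (h [^] i)"
    unfolding gi using comm_mult_right[of b a "h [^] i"] ba bc Ac' a hc by simp
  then show ?thesis using pw by simp
qed

lemma B_in_lc: "B k \<subseteq> lower_central G k"
proof (induction k)
  case 0 then show ?case using Ac by (simp add: B0)
next
  case (Suc k)
  show ?case
  proof
    fix m assume "m \<in> B (Suc k)"
    then obtain x where x: "x \<in> B k" "m = phi x" by (auto simp: BSuc)
    then show "m \<in> lower_central G (Suc k)" using lc_comm_in[of x k h] Suc hc by (auto simp: phi_def)
  qed
qed

lemma lc1_in_B: "lower_central G 1 \<subseteq> B 1"
  unfolding One_nat_def
proof (rule lc_Suc_le[OF B_sub])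
  fix u g assume u: "u \<in> lower_central G 0" and g: "g \<in> carrier G"
  have uc: "u \<in> carrier G" using u by simp
  have nB: "B (Suc 0) \<lhd> G" by (rule B_normal)
  have sB: "subgroup (B (Suc 0)) G" by (rule B_sub)
  have phA: "\<And>b. b \<in> A \<Longrightarrow> phi b \<in> B (Suc 0)" by (simp add: BSuc B0)
  have KA: "\<And>b g. b \<in> A \<Longrightarrow> g \<in> carrier G \<Longrightarrow> commutator G b g \<in> B (Suc 0)"
    using K_lemma[OF subset_refl nB phA] by auto
  have hpow: "commutator G (h [^] (i::nat)) x \<in> B (Suc 0)" if x: "x \<in> carrier G" for i x
  proof -
    obtain b j where b: "b \<in> A" and xj: "x = b \<otimes> h [^] (j::nat)" using struct_decomp[OF fin nA mA hc hA x] by auto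
    have hh: "commutator G (h [^] j) (h [^] i) = \<one>"
      using comm_one_iff[of "h [^] j" "h [^] i"] nat_pow_comm[of h j i] hc by simp
    have "commutator G x (h [^] i) = inv (h [^] j) \<otimes> commutator G b (h [^] i) \<otimes> h [^] j"
      unfolding xj using comm_mult_left[of b "h [^] j" "h [^] i"] hh Ac' b hc by simp
    then have "commutator G x (h [^] i) \<in> B (Suc 0)"
      using normal.inv_op_closed1[OF nB _ KA[OF b]] hc by simp
    then show ?thesis using comm_inv[of "h [^] i" x] hc x subgroup.m_inv_closed[OF sB] by simp
  qed
  obtain a i where a: "a \<in> A" and ui: "u = a \<otimes> h [^] (i::nat)" using struct_decomp[OF fin nA mA hc hA uc] by auto
  have "commutator G u g = (inv (h [^] i) \<otimes> commutator G a g \<otimes> h [^] i) \<otimes> commutator G (h [^] i) g"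
    unfolding ui using comm_mult_left[of a "h [^] i" g] Ac' a hc g by simp
  moreover have "inv (h [^] i) \<otimes> commutator G a g \<otimes> h [^] i \<in> B (Suc 0)"
    using normal.inv_op_closed1[OF nB _ KA[OF a g]] hc by simp
  ultimately show "commutator G u g \<in> B (Suc 0)" using hpow[OF g] subgroup.m_closed[OF sB] by simp
qed

lemma lc_in_B: "k \<ge> 1 \<Longrightarrow> lower_central G k \<subseteq> B k"
proof (induction k rule: dec_induct)
  case base then show ?case by (rule lc1_in_B)
next
  case (step k)
  show ?case
  proof (rule lc_Suc_le[OF B_sub])
    fix u g assume u: "u \<in> lower_central G k" and g: "g \<in> carrier G"
    have phB: "\<And>b. b \<in> B k \<Longrightarrow> phi b \<in> B (Suc k)" by (simp add: BSuc)
    show "commutator G u g \<in> B (Suc k)" using K_lemma[OF B_A B_normal phB] u step.IH g by auto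
  qed
qed

end


context group begin

lemma endo_count:
  assumes fin: "finite (carrier G)" and sA: "subgroup A G"
    and fA: "\<And>x. x \<in> A \<Longrightarrow> f x \<in> A"
    and fm: "\<And>x y. x \<in> A \<Longrightarrow> y \<in> A \<Longrightarrow> f (x \<otimes> y) = f x \<otimes> f y"
    and sI: "subgroup (f ` A) G"
  shows "card A = card (f ` A) * card {x \<in> A. f x = \<one>}"
proof -
  let ?A = "G\<lparr>carrier := A\<rparr>" and ?I = "G\<lparr>carrier := f ` A\<rparr>"
  have gA: "group ?A" using subgroup_imp_group[OF sA] .
  have gI: "group ?I" using subgroup_imp_group[OF sI] .
  have hom: "f \<in> hom ?A ?I" unfolding hom_def using fm by auto
  have gh: "group_hom ?A ?I f" using gA gI hom by (simp add: group_hom_def group_hom_axioms_def)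
  have ker: "kernel ?A ?I f = {x \<in> A. f x = \<one>}" unfolding kernel_def by auto
  have iso: "(?A Mod kernel ?A ?I f) \<cong> ?I" using group_hom.FactGroup_iso[OF gh] by simp
  have c1: "card (carrier (?A Mod kernel ?A ?I f)) = card (f ` A)" using iso_same_card[OF iso] by simp
  have sk: "subgroup (kernel ?A ?I f) ?A" using group_hom.subgroup_kernel[OF gh] .
  have "card (rcosets\<^bsub>?A\<^esub> (kernel ?A ?I f)) * card (kernel ?A ?I f) = order ?A"
    using group.lagrange[OF gA sk] .
  then show ?thesis using c1 ker by (simp add: FactGroup_def order_def)
qed

lemma card_pow:
  assumes p: "Factorial_Ring.prime p" and o: "order G = p ^ n" and sK: "subgroup K G"
  shows "\<exists>e\<le>n. card K = p ^ e"
proof -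
  have "card K dvd p ^ n" using lagrange[OF sK] o by (metis dvd_triv_right)
  then show ?thesis using divides_primepow_nat[OF p] by auto
qed

end

context mcs begin

lemma card_A: "card A = card (B 1) * card ZA"
proof -
  have "card A = card (phi ` A) * card {x \<in> A. phi x = \<one>}"
    using endo_count[OF fin sA phi_A phi_mult] B_sub[of 1] by (simp add: BSuc B0)
  moreover have "{x \<in> A. phi x = \<one>} = ZA" using phi_one_iff ZA_def by auto
  ultimately show ?thesis by (simp add: BSuc B0)
qed

lemma ZA_small:
  assumes p: "Factorial_Ring.prime p" and o: "order G = p ^ n" and n3: "n \<ge> 3"
    and top: "lower_central G (n - 1) = {\<one>}" and low: "lower_central G (n - 2) \<noteq> {\<one>}"
  shows "card ZA \<le> p"
proof -
  have p1: "p > 1" using p prime_gt_1_nat by blast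
  have pw: "\<exists>e\<le>n. card (B k) = p ^ e" for k using card_pow[OF p o B_sub] .
  have finB: "finite (B k)" for k by (rule finite_subset[OF order_trans[OF B_A Ac] fin])
  have "\<not> lower_central G (n - 2) \<subseteq> {\<one>}"
    using low subgroup.one_closed[OF lc_subgroup[of "n-2"]] by auto
  then obtain x where x: "x \<in> lower_central G (n - 2)" "x \<noteq> \<one>" by auto
  have xB: "x \<in> B (n - 2)" proof -
    have "1 \<le> n - 2" using n3 by simp
    then show ?thesis using lc_in_B[of "n-2"] x by auto
  qed
  have Btriv: "B (n - 1) \<subseteq> {\<one>}" using B_in_lc[of "n-1"] top by simp
  have strict: "B (Suc k) \<noteq> B k" if k: "k \<le> n - 3" for k
  proof
    assume eq: "B (Suc k) = B k"
    have "B (k + j) = B k" for j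
    proof (induction j)
      case 0 then show ?case by simp
    next
      case (Suc j)
      have "B (k + Suc j) = phi ` B (k + j)" by (simp add: BSuc)
      also have "... = B k" using Suc eq by (simp add: BSuc)
      finally show ?case .
    qed
    from this[of "n - 1 - k"] have "B (n - 1) = B k" using k n3 by simp
    moreover have "B (n - 2) \<subseteq> B k" using B_mono' k n3 by auto
    ultimately show False using xB Btriv x by auto
  qed
  have step: "p * card (B (Suc k)) \<le> card (B k)" if k: "k \<le> n - 3" for k
  proof -
    have "card (B (Suc k)) < card (B k)"
      by (rule psubset_card_mono[OF finB]) (use B_mono[of k] strict[OF k] in blast)
    moreover obtain a where a: "card (B (Suc k)) = p ^ a" using pw by blast
    moreover obtain b where b: "card (B k) = p ^ b" using pw by blast
    ultimately have "a < b" using p1 by (simp add: power_strict_increasing_iff)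
    then have "Suc a \<le> b" by simp
    then have "p ^ Suc a \<le> p ^ b" using p1 by (intro power_increasing) auto
    then show ?thesis using a b by simp
  qed
  have lowc: "card (B (n - 2)) \<ge> p"
  proof -
    have "{\<one>, x} \<subseteq> B (n - 2)" using xB subgroup.one_closed[OF B_sub] by auto
    moreover have "card {\<one>, x} = 2" using x(2) by simp
    ultimately have "card (B (n - 2)) \<ge> 2" using card_mono[OF finB] by metis
    moreover obtain e where e: "card (B (n - 2)) = p ^ e" using pw by blast
    ultimately have "e \<noteq> 0" by (cases e) auto
    then have "p ^ 1 \<le> p ^ e" using p1 by (intro power_increasing) auto
    then show ?thesis using e by simp
  qed
  have chain: "card (B (n - 2 - j)) \<ge> p ^ (j + 1)" if "j \<le> n - 3" for j
    using that
  proof (induction j)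
    case 0 then show ?case using lowc by simp
  next
    case (Suc j)
    have e: "n - 2 - Suc j \<le> n - 3" using Suc.prems n3 by arith
    have e2: "Suc (n - 2 - Suc j) = n - 2 - j" using Suc.prems n3 by arith
    have Sj: "j \<le> n - 3" using Suc.prems by arith
    have "p ^ (Suc j + 1) = p * p ^ (j + 1)" by simp
    also have "... \<le> p * card (B (n - 2 - j))" using Suc.IH[OF Sj] by simp
    also have "... \<le> card (B (n - 2 - Suc j))" using step[OF e] e2 by simp
    finally show ?case .
  qed
  have b1: "card (B 1) \<ge> p ^ (n - 2)"
  proof -
    have i1: "n - 2 - (n - 3) = 1" and i2: "n - 3 + 1 = n - 2" using n3 by arith+
    show ?thesis using chain[of "n - 3"] unfolding i1 i2 by simp
  qed
  obtain e where e: "e \<le> n" "card A = p ^ e" using card_pow[OF p o sA] by blast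
  have "card A < p ^ n"
  proof -
    have "A \<subset> carrier G" using Ac mA unfolding maximal_subgroup_def by auto
    then have "card A < card (carrier G)" by (rule psubset_card_mono[OF fin])
    then show ?thesis using o by (simp add: order_def)
  qed
  then have "e < n" using e p1 by (simp add: power_strict_increasing_iff)
  then have "e \<le> Suc (n - 2)" using n3 by simp
  then have "p ^ e \<le> p ^ Suc (n - 2)" using p1 by (intro power_increasing) auto
  then have "card A \<le> p ^ (n - 2) * p" using e(2) by (simp only: power_Suc2)
  then have "card (B 1) * card ZA \<le> p ^ (n - 2) * p" using card_A by simp
  then have "p ^ (n - 2) * card ZA \<le> p ^ (n - 2) * p"
    by (rule order_trans[OF mult_le_mono1[OF b1]])
  then show ?thesis using p1 by simp
qed

end


context group begin
lemma sub_pow: "subgroup H G \<Longrightarrow> x \<in> H \<Longrightarrow> x [^] (i::nat) \<in> H"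
  by (induction i) (auto simp: nat_pow_Suc subgroup.one_closed subgroup.m_closed)

lemma sub_comm: "subgroup H G \<Longrightarrow> x \<in> H \<Longrightarrow> y \<in> H \<Longrightarrow> commutator G x y \<in> H"
  by (simp add: commutator_def subgroup.m_closed subgroup.m_inv_closed)
end

context mcs begin

lemma ZA_sub: "subgroup ZA G"
proof (rule subgroupI)
  show "ZA \<subseteq> carrier G" using Ac by (auto simp: ZA_def)
  show "ZA \<noteq> {}" using subgroup.one_closed[OF sA] by (auto simp: ZA_def)
next
  fix a assume a: "a \<in> ZA"
  have ac: "a \<in> carrier G" using a Ac by (auto simp: ZA_def)
  have "inv a \<otimes> g = g \<otimes> inv a" if g: "g \<in> carrier G" for g
  proof -
    have "a \<otimes> g = g \<otimes> a" using a g by (auto simp: ZA_def)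
    then have "inv a \<otimes> (a \<otimes> g) \<otimes> inv a = inv a \<otimes> (g \<otimes> a) \<otimes> inv a" by simp
    then show ?thesis using ac g by (simp add: gsimps)
  qed
  then show "inv a \<in> ZA" using a subgroup.m_inv_closed[OF sA] by (auto simp: ZA_def)
next
  fix a b assume a: "a \<in> ZA" and b: "b \<in> ZA"
  have ac: "a \<in> carrier G" and bc: "b \<in> carrier G" using a b Ac by (auto simp: ZA_def)
  have "a \<otimes> b \<otimes> g = g \<otimes> (a \<otimes> b)" if g: "g \<in> carrier G" for g
  proof -
    have ag: "a \<otimes> g = g \<otimes> a" using a g by (auto simp: ZA_def)
    have bg: "b \<otimes> g = g \<otimes> b" using b g by (auto simp: ZA_def)
    have "a \<otimes> b \<otimes> g = a \<otimes> (b \<otimes> g)" using ac bc g by (simp add: m_assoc)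
    also have "... = a \<otimes> (g \<otimes> b)" by (simp only: bg)
    also have "... = (a \<otimes> g) \<otimes> b" using ac bc g by (simp add: m_assoc)
    also have "... = (g \<otimes> a) \<otimes> b" by (simp only: ag)
    also have "... = g \<otimes> (a \<otimes> b)" using ac bc g by (simp add: m_assoc)
    finally show ?thesis .
  qed
  then show "a \<otimes> b \<in> ZA" using a b subgroup.m_closed[OF sA] by (auto simp: ZA_def)
qed

lemma abelian_if:
  assumes sH: "subgroup H G" and hH: "h \<in> H"
    and cen: "\<And>a g. a \<in> H \<Longrightarrow> a \<in> A \<Longrightarrow> g \<in> carrier G \<Longrightarrow> a \<otimes> g = g \<otimes> a"
  shows "abelian_set G H"
  unfolding abelian_set_def
proof (intro ballI)
  fix x y assume x: "x \<in> H" and y: "y \<in> H"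
  have Hc: "H \<subseteq> carrier G" using sH subgroup.subset by auto
  have dec: "\<exists>a i. a \<in> H \<and> a \<in> A \<and> z = a \<otimes> h [^] (i::nat)" if z: "z \<in> H" for z
  proof -
    have zc: "z \<in> carrier G" using z Hc by auto
    obtain a i where a: "a \<in> A" and zi: "z = a \<otimes> h [^] (i::nat)" using struct_decomp[OF fin nA mA hc hA zc] by blast
    have "a = z \<otimes> inv (h [^] i)" using zi Ac' a hc by (simp add: gsimps)
    then have "a \<in> H" using sub_pow[OF sH hH] z subgroup.m_closed[OF sH] subgroup.m_inv_closed[OF sH] by simp
    then show ?thesis using a zi by blast
  qed
  obtain a i where a: "a \<in> H" "a \<in> A" and xi: "x = a \<otimes> h [^] (i::nat)" using dec[OF x] by blast
  obtain b j where b: "b \<in> H" "b \<in> A" and yj: "y = b \<otimes> h [^] (j::nat)" using dec[OF y] by blast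
  have ac: "a \<in> carrier G" and bc: "b \<in> carrier G" using a b Ac by auto
  have hi: "h [^] i \<in> carrier G" and hj: "h [^] j \<in> carrier G" using hc by auto
  have "x \<otimes> y = a \<otimes> (h [^] i \<otimes> b) \<otimes> h [^] j" unfolding xi yj using ac bc hi hj by (simp add: m_assoc)
  also have "... = a \<otimes> (b \<otimes> h [^] i) \<otimes> h [^] j" by (simp only: cen[OF b hi])
  also have "... = (a \<otimes> b) \<otimes> (h [^] i \<otimes> h [^] j)" using ac bc hi hj by (simp add: m_assoc)
  also have "... = (b \<otimes> a) \<otimes> (h [^] j \<otimes> h [^] i)" by (simp only: cen[OF a bc] nat_pow_comm[OF hc, of i j])
  also have "... = b \<otimes> (a \<otimes> h [^] j) \<otimes> h [^] i" using ac bc hi hj by (simp add: m_assoc)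
  also have "... = b \<otimes> (h [^] j \<otimes> a) \<otimes> h [^] i" by (simp only: cen[OF a(1) a(2) hj])
  also have "... = y \<otimes> x" unfolding xi yj using ac bc hi hj by (simp add: m_assoc)
  finally show "x \<otimes> y = y \<otimes> x" .
qed

end


theorem lemma6p11:
  fixes G (structure) and p :: nat
  assumes "group G" and "Factorial_Ring.prime p" and "finite (carrier G)"
    and "maximal_class G p"
    and "\<exists>M. maximal_subgroup G M \<and> abelian_set G M"
    and "subgroup H G" and "\<not> abelian_set G H"
  shows "centralizer G H \<subseteq> H"
proof -
  interpret group G by (rule assms(1))
  note p = assms(2) and fin = assms(3) and sH = assms(6) and nabH = assms(7)
  obtain A where mA: "maximal_subgroup G A" and abA: "abelian_set G A" using assms(5) by blast
  obtain n where n2: "n \<ge> 2" and o: "order G = p ^ n" and nil: "nilpotent_group G"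
    and cl: "nilpotency_class G = n - 1"
    using assms(4) unfolding maximal_class_def by blast
  have ex: "\<exists>c. lower_central G c = {\<one>}" using nil unfolding nilpotent_group_def by blast
  have top: "lower_central G (n - 1) = {\<one>}"
    using LeastI_ex[OF ex] cl unfolding nilpotency_class_def by simp
  have low: "lower_central G (n - 2) \<noteq> {\<one>}"
  proof
    assume "lower_central G (n - 2) = {\<one>}"
    then have "(LEAST c. lower_central G c = {\<one>}) \<le> n - 2" by (rule Least_le)
    then show False using cl n2 unfolding nilpotency_class_def by simp
  qed
  have Hc: "H \<subseteq> carrier G" using sH subgroup.subset by auto
  have n3: "n \<ge> 3"
  proof (rule ccontr)
    assume "\<not> n \<ge> 3"
    then have "n = 2" using n2 by simp
    then have t1: "lower_central G (Suc 0) = {\<one>}" using top by simp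
    have "abelian_set G H" unfolding abelian_set_def
    proof (intro ballI)
      fix x y assume "x \<in> H" "y \<in> H"
      then have xc: "x \<in> carrier G" and yc: "y \<in> carrier G" using Hc by auto
      have "commutator G x y \<in> lower_central G (Suc 0)" using lc_comm_in[of x 0 y] xc yc by simp
      then show "x \<otimes> y = y \<otimes> x" using t1 comm_one_iff[OF xc yc] by simp
    qed
    then show False using nabH by simp
  qed
  have nA: "A \<lhd> G" using maximal_normal[OF fin top mA] .
  have sA: "subgroup A G" using mA unfolding maximal_subgroup_def by auto
  have Ac: "A \<subseteq> carrier G" using sA subgroup.subset by auto
  obtain h where hH: "h \<in> H" and hA: "h \<notin> A"
    using nabH abA unfolding abelian_set_def by blast
  have hc: "h \<in> carrier G" using hH Hc by auto
  interpret M: mcs G A h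
    unfolding mcs_def mcs_axioms_def using is_group fin nA mA abA hc hA by auto
  have Zs: "card M.ZA \<le> p" using M.ZA_small[OF p o n3 top low] .
  obtain a0 where a0: "a0 \<in> H" "a0 \<in> A" "a0 \<notin> M.ZA"
  proof -
    have "\<not> (\<forall>a. a \<in> H \<longrightarrow> a \<in> A \<longrightarrow> a \<in> M.ZA)"
    proof
      assume al: "\<forall>a. a \<in> H \<longrightarrow> a \<in> A \<longrightarrow> a \<in> M.ZA"
      have "abelian_set G H"
        by (rule M.abelian_if[OF sH hH]) (use al in \<open>auto simp: M.ZA_def\<close>)
      then show False using nabH by simp
    qed
    then show ?thesis using that by blast
  qed
  define s where "s k = (M.phi ^^ k) a0" for k
  have sH': "s k \<in> H" for k
  proof (induction k)
    case 0 then show ?case using a0 by (simp add: s_def)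
  next
    case (Suc k) then show ?case using sub_comm[OF sH _ hH] by (simp add: s_def M.phi_def)
  qed
  have sB: "s k \<in> M.B k" for k using a0(2) by (simp add: s_def M.B_def)
  have sA': "s k \<in> A" for k using sB M.B_A by blast
  have sn: "s (n - 1) = \<one>" using sB[of "n-1"] M.B_in_lc[of "n-1"] top by auto
  have exk: "\<exists>k. s k = \<one>" using sn by blast
  define k0 where "k0 = (LEAST k. s k = \<one>)"
  have k0: "s k0 = \<one>" unfolding k0_def using LeastI_ex[OF exk] .
  have s0: "s 0 \<noteq> \<one>" using a0 M.phi_one_iff[OF a0(2)] M.phi_one by (auto simp: s_def)
  have k0ne: "k0 \<noteq> 0"
  proof
    assume "k0 = 0" then show False using k0 s0 by simp
  qed
  then obtain k1 where k1: "k0 = Suc k1" using not0_implies_Suc by blast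
  have "k1 < k0" using k1 by simp
  then have sk1: "s k1 \<noteq> \<one>" unfolding k0_def by (rule not_less_Least)
  have "M.phi (s k1) = \<one>" using k0 k1 by (simp add: s_def)
  then have yZ: "s k1 \<in> M.ZA" using M.phi_one_iff[OF sA'] by simp
  have ZH: "M.ZA \<subseteq> H"
  proof -
    have sZH: "subgroup (H \<inter> M.ZA) G" using subgroups_Inter_pair[OF sH M.ZA_sub] .
    have finZ: "finite M.ZA" by (rule finite_subset[OF subgroup.subset[OF M.ZA_sub] fin])
    have two: "{\<one>, s k1} \<subseteq> H \<inter> M.ZA" using sH' yZ subgroup.one_closed[OF sZH] by auto
    have c2: "card {\<one>, s k1} = 2" using sk1 by simp
    have HZ: "H \<inter> M.ZA \<subseteq> M.ZA" by blast
    have "card (H \<inter> M.ZA) \<ge> 2" using card_mono[OF finite_subset[OF HZ finZ] two] c2 by simp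
    moreover obtain e where e: "card (H \<inter> M.ZA) = p ^ e" using card_pow[OF p o sZH] by blast
    ultimately have "e \<noteq> 0" by (cases e) auto
    then have "p ^ 1 \<le> p ^ e" using prime_gt_1_nat[OF p] by (intro power_increasing) auto
    then have "card (H \<inter> M.ZA) \<ge> card M.ZA" using e Zs by simp
    moreover have "card (H \<inter> M.ZA) \<le> card M.ZA" by (rule card_mono[OF finZ HZ])
    ultimately have "H \<inter> M.ZA = M.ZA" by (intro card_subset_eq[OF finZ HZ]) simp
    then show ?thesis by blast
  qed
  show ?thesis
  proof
    fix c assume "c \<in> centralizer G H"
    then have cc: "c \<in> carrier G" and cH: "\<And>x. x \<in> H \<Longrightarrow> c \<otimes> x = x \<otimes> c"
      unfolding centralizer_def by auto
    show "c \<in> H"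
    proof (cases "c \<in> A")
      case True
      have "c \<otimes> h = h \<otimes> c" using cH[OF hH] .
      then have "\<forall>g\<in>carrier G. c \<otimes> g = g \<otimes> c" using struct_central[OF fin nA mA abA hc hA True] by blast
      then have "c \<in> M.ZA" using True unfolding M.ZA_def by blast
      then show ?thesis using ZH by auto
    next
      case False
      have "abelian_set G H"
      proof (rule M.abelian_if[OF sH hH])
        fix a g assume a: "a \<in> H" "a \<in> A" and g: "g \<in> carrier G"
        have "a \<otimes> c = c \<otimes> a" by (rule sym[OF cH[OF a(1)]])
        then show "a \<otimes> g = g \<otimes> a" by (rule struct_central[OF fin nA mA abA cc False a(2) _ g])
      qed
      then show ?thesis using nabH by simp
    qed
  qed
qed


end
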